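(* Let $q$ be a power of an odd prime, $q^n-1=ls$ with $l,s$ positive integers, $\gamma$ a primitive element of $\mathbb{F}_{q^n}$, $\xi=\gamma^s$, and $C_i=\gamma^i\{\gamma^{lj}:0\le j\le s-1\}$ for $0\le i\le l-1$. Let $r$ be a positive integer, $f\in\mathbb{F}_{q^n}[x]$, $A_i=f(\xi^{iq^r})$, and $S(x)=x^{q^r}f(x^{sq^r})$, so that $S(x)=A_ix^{q^r}$ for $x\in C_i$. Suppose $S$ is a scattered polynomial of index $t\in\{0,\dots,n-1\}$ over $\mathbb{F}_{q^n}$. If $y\in C_i$ and $z\in C_j$ ($0\le i,j\le l-1$) satisfy $S(y)/y^{q^t}=S(z)/z^{q^t}$, then $A_i=A_j$.
   Context: A polynomial (function) $S$ on $\mathbb{F}_{q^n}$ is a scattered polynomial of index $t$ over $\mathbb{F}_{q^n}$ if for all $y,z\in\mathbb{F}_{q^n}^*$, $\frac{S(y)}{y^{q^t}}=\frac{S(z)}{z^{q^t}}$ implies $y/z\in\mathbb{F}_q$. *)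

theory Defs
  imports "HOL-Computational_Algebra.Polynomial" "HOL-Library.Cardinality"
begin

text \<open>The ambient field F_{q^n} is a finite field type 'a with CARD('a) = q^n.
  The subfield F_q of F_{q^n} is the set of fixed points of the q-Frobenius.\<close>

definition subfield_Fq :: "nat \<Rightarrow> 'a::{field,finite} set" where
  "subfield_Fq q = {x. x ^ q = x}"

definition primitive_element :: "'a::{field,finite} \<Rightarrow> bool" where
  "primitive_element \<gamma> \<longleftrightarrow> (\<forall>x. x \<noteq> 0 \<longrightarrow> (\<exists>i::nat. x = \<gamma> ^ i))"

definition scattered :: "('a::{field,finite} \<Rightarrow> 'a) \<Rightarrow> nat \<Rightarrow> nat \<Rightarrow> bool" where
  "scattered S q t \<longleftrightarrow>
     (\<forall>y z. y \<noteq> 0 \<longrightarrow> z \<noteq> 0 \<longrightarrow> S y / y ^ (q ^ t) = S z / z ^ (q ^ t)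
        \<longrightarrow> y / z \<in> subfield_Fq q)"

definition coset_C :: "'a::{field,finite} \<Rightarrow> nat \<Rightarrow> nat \<Rightarrow> nat \<Rightarrow> 'a set" where
  "coset_C \<gamma> l s i = {\<gamma> ^ i * \<gamma> ^ (l * j) | j. j \<le> s - 1}"

end

theory Submission
  imports Defs "HOL-Computational_Algebra.Primes"
begin

lemma fixpow: fixes x :: "'a::field" assumes "x ^ q = x" shows "x ^ (q ^ m) = x"
proof (induction m)
  case 0 then show ?case by simp
next
  case (Suc m)
  have "x ^ (q ^ Suc m) = x ^ (q ^ m * q)" by (simp add: mult.commute)
  also have "\<dots> = (x ^ (q ^ m)) ^ q" by (simp add: power_mult)
  finally have "x ^ (q ^ Suc m) = (x ^ (q ^ m)) ^ q" .
  then show ?case using Suc assms by simp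
qed

lemma my_fermat:
  fixes x :: "'a :: {field,finite}"
  shows "x ^ CARD('a) = x"
proof (cases "x = 0")
  case False
  have "x * (\<Prod>y\<in>UNIV-{0}. x * y) = x * x ^ (CARD('a) - 1) * \<Prod>(UNIV-{0::'a})"
    by (simp add: prod.distrib mult_ac)
  also have "x * x ^ (CARD('a) - 1) = x ^ Suc (CARD('a) - 1)"
    by (subst power_Suc) auto
  also have "Suc (CARD('a) - 1) = CARD('a)"
    using finite_UNIV_card_ge_0[where ?'a = 'a] by simp
  also have "(\<Prod>y\<in>UNIV-{0}. x * y) = (\<Prod>y\<in>UNIV-{0}. y)"
    by (rule prod.reindex_bij_witness[of _ "\<lambda>y. y / x" "\<lambda>y. x * y"]) (use False in auto)
  finally show ?thesis
    by simp
qed (use finite_UNIV_card_ge_0[where ?'a = 'a] in auto)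

theorem mainTheorem3:
  fixes p k q n l s r t i j :: nat
    and \<gamma> \<xi> y z :: "'a::{field,finite}"
    and f :: "'a poly"
    and S :: "'a \<Rightarrow> 'a"
    and A :: "nat \<Rightarrow> 'a"
  assumes "prime p" and "odd p" and "k > 0" and "q = p ^ k"
    and "n > 0" and "CARD('a) = q ^ n"
    and "l > 0" and "s > 0" and "q ^ n - 1 = l * s"
    and "primitive_element \<gamma>" and "\<xi> = \<gamma> ^ s"
    and "r > 0"
    and "\<And>m. A m = poly f (\<xi> ^ (m * q ^ r))"
    and "\<And>x. S x = x ^ (q ^ r) * poly f (x ^ (s * q ^ r))"
    and "t \<le> n - 1" and "scattered S q t"
    and "i \<le> l - 1" and "j \<le> l - 1"
    and "y \<in> coset_C \<gamma> l s i" and "z \<in> coset_C \<gamma> l s j"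
    and "S y / y ^ (q ^ t) = S z / z ^ (q ^ t)"
  shows "A i = A j"
proof -
  have p2: "p \<ge> 2" using assms(1) prime_ge_2_nat by blast
  have "p \<noteq> 2" using assms(2) by auto
  then have p3: "p \<ge> 3" using p2 by linarith
  have "q \<ge> p" using assms(3,4) p2
    using power_increasing[of 1 k p] by simp
  then have "q ^ n \<ge> q" using assms(5) p2
    using power_increasing[of 1 n q] by simp
  then have card3: "CARD('a) \<ge> 3" using assms(6) p3 \<open>q \<ge> p\<close> by linarith
  have g0: "\<gamma> \<noteq> 0"
  proof
    assume g: "\<gamma> = 0"
    have "UNIV \<subseteq> {0, 1::'a}"
    proof
      fix x :: 'a
      show "x \<in> {0,1}"
      proof (cases "x = 0")
        case False
        then obtain m where "x = \<gamma> ^ m" using assms(10) unfolding primitive_element_def by blast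
        then show ?thesis using g by (cases m) auto
      qed simp
    qed
    then have "CARD('a) \<le> card {0, 1::'a}" by (metis card_mono finite.emptyI finite.insertI)
    also have "\<dots> \<le> 2" by (simp add: card_insert_le_m1)
    finally show False using card3 by simp
  qed
  have gls: "\<gamma> ^ (l * s) = 1"
  proof -
    have "\<gamma> ^ CARD('a) = \<gamma>" by (rule my_fermat)
    moreover have "CARD('a) = Suc (l * s)" using assms(6,9) card3 by simp
    ultimately have "\<gamma> * \<gamma> ^ (l*s) = \<gamma> * 1" by simp
    then show ?thesis using g0 by simp
  qed
  have key: "S x = A m * x ^ (q ^ r)" if xin: "x \<in> coset_C \<gamma> l s m" for x m
  proof -
    obtain a where x: "x = \<gamma> ^ m * \<gamma> ^ (l * a)" using xin unfolding coset_C_def by blast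
    have "x ^ s = \<xi> ^ m"
    proof -
      have "x ^ s = \<gamma> ^ (s * m) * (\<gamma> ^ (l * s)) ^ a"
        by (simp add: x power_mult_distrib flip: power_mult) (simp add: ac_simps)
      then show ?thesis using gls assms(11) by (simp add: power_mult)
    qed
    then have "x ^ (s * q ^ r) = \<xi> ^ (m * q ^ r)" by (simp add: power_mult)
    then show ?thesis using assms(13,14) by simp
  qed
  have ny: "y \<noteq> 0" and nz: "z \<noteq> 0" using assms(19,20) g0 unfolding coset_C_def by auto
  have "y / z \<in> subfield_Fq q" using assms(16,21) ny nz unfolding scattered_def by blast
  then have lq: "(y/z) ^ q = y/z" unfolding subfield_Fq_def by simp
  define la where "la = y / z"
  have la0: "la \<noteq> 0" using ny nz la_def by simp
  have yz: "y = la * z" using nz la_def by simp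
  have lr: "la ^ (q ^ r) = la" and lt: "la ^ (q ^ t) = la" using lq fixpow la_def by blast+
  have "A i * y ^ (q ^ r) / y ^ (q ^ t) = A j * z ^ (q ^ r) / z ^ (q ^ t)"
    using assms(21) key assms(19,20) by simp
  then have "A i * la * z ^ (q ^ r) / (la * z ^ (q ^ t)) = A j * z ^ (q ^ r) / z ^ (q ^ t)"
    by (simp add: yz power_mult_distrib lr lt)
  then have "A i * z ^ (q ^ r) / z ^ (q ^ t) = A j * z ^ (q ^ r) / z ^ (q ^ t)"
    using la0 by simp
  then show ?thesis using nz by (simp add: divide_simps)
qed

end
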